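(* If $\mathcal C$ is an infinite almost disjoint family of functions from $\omega$ to $\omega$ (each function viewed as a subset of $\omega\times\omega$), then $\bigcup\mathcal C$ is fat.
   Context: A set $F\subseteq\omega\times\omega$ is fat iff $\limsup_{n}|\pi_nF|=\omega$, where $\pi_nF=\{j:(n,j)\in F\}$; i.e. for every $m<\omega$ there are infinitely many $n$ with $|\pi_nF|>m$. An almost disjoint family is a collection of infinite sets whose pairwise intersections are finite. *)

theory Defs
  imports Main
begin

definition sect :: "nat \<Rightarrow> (nat \<times> nat) set \<Rightarrow> nat set" where
  "sect n F = {j. (n, j) \<in> F}"

text \<open>F is fat: for every m there are infinitely many n with |sect n F| > m
  (an infinite section counts as larger than every m).\<close>
definition fat :: "(nat \<times> nat) set \<Rightarrow> bool" where
  "fat F \<longleftrightarrow> (\<forall>m::nat. infinite {n. infinite (sect n F) \<or> card (sect n F) > m})"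

definition graph :: "(nat \<Rightarrow> nat) \<Rightarrow> (nat \<times> nat) set" where
  "graph f = {(n, f n) | n. True}"

text \<open>Almost disjoint family of functions: graphs of distinct members meet finitely
  (graphs are automatically infinite).\<close>
definition almost_disjoint_fun :: "(nat \<Rightarrow> nat) set \<Rightarrow> bool" where
  "almost_disjoint_fun C \<longleftrightarrow>
     (\<forall>f\<in>C. \<forall>g\<in>C. f \<noteq> g \<longrightarrow> finite (graph f \<inter> graph g))"

end

theory Submission
  imports Defs
begin

lemma eq_set_finite:
  assumes "finite (graph f \<inter> graph g)"
  shows "finite {n. f n = g n}"
proof -
  have "{n. f n = g n} = fst ` (graph f \<inter> graph g)"
    unfolding graph_def by force
  thus ?thesis using assms by simp
qed

theorem lemma2p2:
  fixes C :: "(nat \<Rightarrow> nat) set"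
  assumes "infinite C" and "almost_disjoint_fun C"
  shows "fat (\<Union>f\<in>C. graph f)"
  unfolding fat_def
proof
  fix m :: nat
  let ?F = "\<Union>f\<in>C. graph f"
  obtain D where D: "D \<subseteq> C" "finite D" "card D = Suc m"
    using infinite_arbitrarily_large[OF assms(1)] by blast
  define B where "B = (\<Union>p\<in>{p \<in> D \<times> D. fst p \<noteq> snd p}. {n. fst p n = snd p n})"
  have fB: "finite B" unfolding B_def
  proof (rule finite_UN_I)
    show "finite {p \<in> D \<times> D. fst p \<noteq> snd p}" using D(2) by simp
  next
    fix p assume "p \<in> {p \<in> D \<times> D. fst p \<noteq> snd p}"
    then have "fst p \<in> C" "snd p \<in> C" "fst p \<noteq> snd p" using D(1) by auto
    then show "finite {n. fst p n = snd p n}"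
      using assms(2) unfolding almost_disjoint_fun_def
      by (intro eq_set_finite) blast
  qed
  have "UNIV - B \<subseteq> {n. infinite (sect n ?F) \<or> card (sect n ?F) > m}"
  proof
    fix n assume n: "n \<in> UNIV - B"
    have inj: "inj_on (\<lambda>f. f n) D"
      using n unfolding B_def inj_on_def by auto
    have sub: "(\<lambda>f. f n) ` D \<subseteq> sect n ?F"
      using D(1) unfolding sect_def graph_def by auto
    have c: "card ((\<lambda>f. f n) ` D) = Suc m" using card_image[OF inj] D(3) by simp
    show "n \<in> {n. infinite (sect n ?F) \<or> card (sect n ?F) > m}"
    proof (cases "finite (sect n ?F)")
      case True
      with card_mono[OF True sub] c show ?thesis by simp
    qed simp
  qed
  moreover have "infinite (UNIV - B :: nat set)" using fB by simp
  ultimately show "infinite {n. infinite (sect n ?F) \<or> card (sect n ?F) > m}"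
    using finite_subset by blast
qed

end
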